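(* Let $\mathcal{F}\subseteq\mathcal{P}(\omega)$ be a free filter and let $D,E\subseteq(-1,1)^\omega$ be countable sets. Then there exists a homeomorphism $h\colon Q\to Q$ of $Q=[-1,1]^\omega$ such that $h[C_\mathcal{F}]=C_\mathcal{F}$, $h[(-1,1)^\omega]=(-1,1)^\omega$, and for all $d\in D$, $e\in E$ and $n\in\omega$, $h(d)(n)\ne e(n)$.
   Context: A filter on $\omega$ is free if it contains all cofinite sets. $Q=[-1,1]^\omega$ has the product topology and $Q^\circ=(-1,1)^\omega$. $K_\mathcal{F}=\{f\in Q:\forall m\in\omega\ \{n\in\omega:|f(n)|<2^{-m}\}\in\mathcal{F}\}$ and $C_\mathcal{F}=K_\mathcal{F}\cap Q^\circ$. *)

theory Defs
  imports "HOL-Analysis.Analysis"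
begin

definition is_filter :: "nat set set \<Rightarrow> bool" where
  "is_filter F \<longleftrightarrow> UNIV \<in> F \<and> {} \<notin> F \<and>
     (\<forall>A B. A \<in> F \<and> B \<in> F \<longrightarrow> A \<inter> B \<in> F) \<and>
     (\<forall>A B. A \<in> F \<and> A \<subseteq> B \<longrightarrow> B \<in> F)"

definition free_filter :: "nat set set \<Rightarrow> bool" where
  "free_filter F \<longleftrightarrow> is_filter F \<and> (\<forall>A. finite (UNIV - A) \<longrightarrow> A \<in> F)"

definition Qset :: "(nat \<Rightarrow> real) set" where
  "Qset = {f. \<forall>n. f n \<in> {-1..1}}"

definition Qtop :: "(nat \<Rightarrow> real) topology" where
  "Qtop = product_topology (\<lambda>_. subtopology euclideanreal {-1..1}) UNIV"

definition Qint :: "(nat \<Rightarrow> real) set" where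
  "Qint = {f. \<forall>n. f n \<in> {-1<..<1}}"

definition K_F :: "nat set set \<Rightarrow> (nat \<Rightarrow> real) set" where
  "K_F F = {f \<in> Qset. \<forall>m::nat. {n. \<bar>f n\<bar> < inverse (2 ^ m)} \<in> F}"

definition C_F :: "nat set set \<Rightarrow> (nat \<Rightarrow> real) set" where
  "C_F F = K_F F \<inter> Qint"

lemma topspace_Qtop: "topspace Qtop = Qset"
  by (auto simp: Qtop_def Qset_def PiE_def extensional_def)

end

theory Submission
  imports Defs
begin

definition phi :: "real \<Rightarrow> real \<Rightarrow> real" where
  "phi a t = t + a * (1 - t^2)"

lemma phi_mono:
  assumes "\<bar>a\<bar> < 1/2" "x \<in> {-1..1}" "y \<in> {-1..1}" "x < y"
  shows "phi a x < phi a y"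
proof -
  have e: "phi a y - phi a x = (y - x) * (1 - a * (x + y))"
    by (simp add: phi_def power2_eq_square algebra_simps)
  have "\<bar>x + y\<bar> \<le> 2" using assms(2,3) by auto
  hence "\<bar>a * (x + y)\<bar> \<le> \<bar>a\<bar> * 2" by (simp add: abs_mult mult_left_mono)
  hence "a * (x + y) < 1" using assms(1) by linarith
  hence "(y - x) * (1 - a * (x + y)) > 0" using assms(4) by simp
  thus ?thesis using e by linarith
qed

lemma phi_inj:
  assumes "\<bar>a\<bar> < 1/2" "x \<in> {-1..1}" "y \<in> {-1..1}" "phi a x = phi a y"
  shows "x = y"
  using phi_mono[OF assms(1) assms(2,3)] phi_mono[OF assms(1) assms(3,2)] assms(4)
  by (metis linorder_neqE_linordered_idom order_less_irrefl)

lemma phi_pm1: "phi a 1 = 1" "phi a (-1) = -1"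
  by (auto simp: phi_def)

lemma phi_cont: "continuous_on S (phi a)"
  unfolding phi_def by (intro continuous_intros)

lemma phi_close:
  assumes "t \<in> {-1..1}"
  shows "\<bar>phi a t - t\<bar> \<le> \<bar>a\<bar>"
proof -
  have "0 \<le> 1 - t^2" "1 - t^2 \<le> 1" using assms abs_square_le_1[of t] by auto
  thus ?thesis by (simp add: phi_def abs_mult mult_left_le)
qed

lemma phi_closed:
  assumes "\<bar>a\<bar> < 1/2" "t \<in> {-1..1}"
  shows "phi a t \<in> {-1..1}"
proof (cases "t = 1 \<or> t = -1")
  case True thus ?thesis by (auto simp: phi_pm1)
next
  case False
  hence "-1 < t" "t < 1" using assms by auto
  thus ?thesis using phi_mono[OF assms(1), of "-1" t] phi_mono[OF assms(1), of t 1]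
    by (auto simp: phi_pm1)
qed

lemma phi_open:
  assumes "\<bar>a\<bar> < 1/2" "t \<in> {-1<..<1}"
  shows "phi a t \<in> {-1<..<1}"
  using assms phi_mono[OF assms(1), of "-1" t] phi_mono[OF assms(1), of t 1]
  by (auto simp: phi_pm1)

lemma phi_onto:
  assumes "\<bar>a\<bar> < 1/2" "s \<in> {-1..1}"
  shows "\<exists>t\<in>{-1..1}. phi a t = s"
  using IVT'[of "phi a" "-1" s 1] assms phi_cont by (auto simp: phi_pm1)

lemma phi_onto_open:
  assumes "\<bar>a\<bar> < 1/2" "s \<in> {-1<..<1}"
  shows "\<exists>t\<in>{-1<..<1}. phi a t = s"
proof -
  obtain t where t: "t \<in> {-1..1}" "phi a t = s" using phi_onto[OF assms(1), of s] assms(2) by fastforce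
  have "t \<noteq> 1" "t \<noteq> -1" using t assms(2) phi_pm1[of a] by auto
  thus ?thesis using t by auto
qed

lemma close_K:
  assumes F: "free_filter F" and u: "u \<in> Qset" and v: "v \<in> K_F F"
    and c: "\<And>n. \<bar>u n - v n\<bar> \<le> inverse (2^n)"
  shows "u \<in> K_F F"
proof -
  have filt: "is_filter F" and cof: "\<And>A. finite (UNIV - A) \<Longrightarrow> A \<in> F"
    using F by (auto simp: free_filter_def)
  have "{n. \<bar>u n\<bar> < inverse (2 ^ m)} \<in> F" for m :: nat
  proof -
    have A1: "{n. \<bar>v n\<bar> < inverse (2 ^ Suc m)} \<in> F" using v unfolding K_F_def by blast
    have A2: "{n. Suc m \<le> n} \<in> F"
    proof (rule cof)
      have "UNIV - {n. Suc m \<le> n} = {..m}" by auto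
      thus "finite (UNIV - {n. Suc m \<le> n})" by simp
    qed
    have "{n. \<bar>v n\<bar> < inverse (2 ^ Suc m)} \<inter> {n. Suc m \<le> n} \<in> F"
      using filt A1 A2 by (auto simp: is_filter_def)
    moreover have "{n. \<bar>v n\<bar> < inverse (2 ^ Suc m)} \<inter> {n. Suc m \<le> n} \<subseteq> {n. \<bar>u n\<bar> < inverse (2 ^ m)}"
    proof
      fix n assume "n \<in> {n. \<bar>v n\<bar> < inverse (2 ^ Suc m)} \<inter> {n. Suc m \<le> n}"
      hence h1: "\<bar>v n\<bar> < inverse (2 ^ Suc m)" and h2: "Suc m \<le> n" by auto
      have "(2::real) ^ Suc m \<le> 2 ^ n" using h2 by (intro power_increasing) auto
      hence "inverse ((2::real) ^ n) \<le> inverse (2 ^ Suc m)"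
        by (intro le_imp_inverse_le) auto
      moreover have "\<bar>u n\<bar> \<le> \<bar>v n\<bar> + \<bar>u n - v n\<bar>" by linarith
      moreover have "inverse ((2::real) ^ Suc m) + inverse (2 ^ Suc m) = inverse (2 ^ m)"
        by simp
      ultimately show "n \<in> {n. \<bar>u n\<bar> < inverse (2 ^ m)}" using h1 c[of n] by simp
    qed
    ultimately show ?thesis using filt by (auto simp: is_filter_def)
  qed
  thus ?thesis using u by (auto simp: K_F_def)
qed

theorem mainTheorem13:
  fixes F :: "nat set set" and D E :: "(nat \<Rightarrow> real) set"
  assumes "free_filter F"
    and "countable D" and "D \<subseteq> Qint"
    and "countable E" and "E \<subseteq> Qint"
  shows "\<exists>h. homeomorphic_map Qtop Qtop h \<and> h ` C_F F = C_F F \<and> h ` Qint = Qint \<and>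
           (\<forall>d\<in>D. \<forall>e\<in>E. \<forall>n. h d n \<noteq> e n)"
proof -
  define B where "B n = (\<lambda>(d,e). (e n - d n) / (1 - (d n)^2)) ` (D \<times> E)" for n :: nat
  have cB: "countable (B n)" for n
    unfolding B_def using assms(2,4) by (intro countable_image countable_SIGMA) auto
  have "\<exists>a. a \<in> {0<..<inverse (2^(n+2))} \<and> a \<notin> B n" for n :: nat
  proof (rule ccontr)
    assume "\<not> ?thesis"
    hence "{0<..<inverse ((2::real)^(n+2))} \<subseteq> B n" by auto
    hence "countable {0<..<inverse ((2::real)^(n+2))}" using cB countable_subset by blast
    thus False using uncountable_open_interval[of 0 "inverse ((2::real)^(n+2))"] by simp
  qed
  then obtain A where A: "\<And>n. A n \<in> {0<..<inverse (2^(n+2))} \<and> A n \<notin> B n" by metis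
  have Ainv: "\<bar>A n\<bar> \<le> inverse (2^n)" for n
  proof -
    have "(2::real)^n \<le> 2^(n+2)" by (intro power_increasing) auto
    hence "inverse ((2::real)^(n+2)) \<le> inverse (2^n)" by (intro le_imp_inverse_le) auto
    thus ?thesis using A[of n] by auto
  qed
  have Ah: "\<bar>A n\<bar> < 1/2" for n
  proof -
    have "(2::real)^1 \<le> 2^(n+2)" by (intro power_increasing) auto
    hence "inverse ((2::real)^(n+2)) \<le> inverse 2" by (intro le_imp_inverse_le) auto
    thus ?thesis using A[of n] by auto
  qed
  define h where "h f = (\<lambda>n. phi (A n) (f n))" for f :: "nat \<Rightarrow> real"
  have hQ: "h ` Qset = Qset"
  proof
    show "h ` Qset \<subseteq> Qset" using phi_closed[OF Ah] by (auto simp: h_def Qset_def)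
    show "Qset \<subseteq> h ` Qset"
    proof
      fix g assume "g \<in> Qset"
      hence "\<forall>n. \<exists>t\<in>{-1..1}. phi (A n) t = g n" using phi_onto[OF Ah] by (auto simp: Qset_def)
      then obtain f where "\<And>n. f n \<in> {-1..1} \<and> phi (A n) (f n) = g n" by metis
      hence "f \<in> Qset" "h f = g" by (auto simp: Qset_def h_def)
      thus "g \<in> h ` Qset" by blast
    qed
  qed
  have hI: "h ` Qint = Qint"
  proof
    show "h ` Qint \<subseteq> Qint" using phi_open[OF Ah] by (auto simp: h_def Qint_def)
    show "Qint \<subseteq> h ` Qint"
    proof
      fix g assume "g \<in> Qint"
      hence "\<forall>n. \<exists>t\<in>{-1<..<1}. phi (A n) t = g n" using phi_onto_open[OF Ah] by (auto simp: Qint_def)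
      then obtain f where "\<And>n. f n \<in> {-1<..<1} \<and> phi (A n) (f n) = g n" by metis
      hence "f \<in> Qint" "h f = g" by (auto simp: Qint_def h_def)
      thus "g \<in> h ` Qint" by blast
    qed
  qed
  have hinj: "inj_on h Qset"
  proof (rule inj_onI)
    fix f g assume "f \<in> Qset" "g \<in> Qset" "h f = h g"
    have "f n = g n" for n
    proof -
      have "phi (A n) (f n) = phi (A n) (g n)" using fun_cong[OF \<open>h f = h g\<close>, of n] by (simp add: h_def)
      moreover have "f n \<in> {-1..1}" "g n \<in> {-1..1}" using \<open>f \<in> Qset\<close> \<open>g \<in> Qset\<close> by (auto simp: Qset_def)
      ultimately show ?thesis using phi_inj[OF Ah] by blast
    qed
    thus "f = g" by auto
  qed
  have QI: "Qint \<subseteq> Qset" by (auto simp: Qint_def Qset_def less_imp_le)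
  have hclose: "\<bar>h f n - f n\<bar> \<le> inverse (2^n)" if "f \<in> Qset" for f n
    using phi_close[of "f n" "A n"] that Ainv[of n] by (auto simp: Qset_def h_def)
  have cont: "continuous_map Qtop Qtop h"
    unfolding Qtop_def continuous_map_componentwise_UNIV
  proof
    fix k :: nat
    have p: "continuous_map (product_topology (\<lambda>_. subtopology euclideanreal {-1..1}) UNIV) euclideanreal (\<lambda>x. x k)"
      using continuous_map_product_projection[of k UNIV "\<lambda>_. subtopology euclideanreal {-1..1}"]
      continuous_map_in_subtopology by auto
    have "continuous_map (product_topology (\<lambda>_. subtopology euclideanreal {-1..1}) UNIV) euclideanreal (\<lambda>x. h x k)"
      unfolding h_def phi_def by (intro continuous_intros p)
    moreover have "(\<lambda>x. h x k) ` topspace (product_topology (\<lambda>_. subtopology euclideanreal {-1..1}) UNIV) \<subseteq> {-1..1}"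
    proof
      fix y assume "y \<in> (\<lambda>x. h x k) ` topspace (product_topology (\<lambda>_. subtopology euclideanreal {-1..1}) UNIV)"
      then obtain x where "x \<in> UNIV \<rightarrow>\<^sub>E {-1..1}" "y = h x k" by auto
      hence "x k \<in> {-1..1}" "y = phi (A k) (x k)" by (auto simp: h_def)
      thus "y \<in> {-1..1}" using phi_closed[OF Ah] by blast
    qed
    ultimately show "continuous_map (product_topology (\<lambda>_. subtopology euclideanreal {-1..1}) UNIV) (subtopology euclideanreal {-1..1}) (\<lambda>x. h x k)"
      using continuous_map_in_subtopology by blast
  qed
  have comp: "compact_space Qtop"
    unfolding Qtop_def
    using compact_space_product_topology compact_space_subtopology compactin_euclidean_iff by blast
  have haus: "Hausdorff_space Qtop"
    unfolding Qtop_def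
    using Hausdorff_space_euclidean Hausdorff_space_product_topology Hausdorff_space_subtopology by blast
  have hom: "homeomorphic_map Qtop Qtop h"
    by (rule continuous_imp_homeomorphic_map[OF cont comp haus]) (auto simp: topspace_Qtop hQ hinj)
  have hC: "h ` C_F F = C_F F"
  proof
    show "h ` C_F F \<subseteq> C_F F"
    proof
      fix g assume "g \<in> h ` C_F F"
      then obtain f where f: "f \<in> C_F F" "g = h f" by auto
      have fQ: "f \<in> Qset" "f \<in> K_F F" "f \<in> Qint" using f QI by (auto simp: C_F_def)
      have "g \<in> Qint" using f hI fQ by auto
      moreover have "g \<in> K_F F"
        using close_K[OF assms(1), of g f] fQ hclose[of f] f QI \<open>g \<in> Qint\<close> by auto
      ultimately show "g \<in> C_F F" by (auto simp: C_F_def)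
    qed
    show "C_F F \<subseteq> h ` C_F F"
    proof
      fix g assume g: "g \<in> C_F F"
      hence "g \<in> Qint" "g \<in> K_F F" by (auto simp: C_F_def)
      then obtain f where f: "f \<in> Qint" "g = h f" using hI by auto
      have "\<bar>f n - g n\<bar> \<le> inverse (2^n)" for n using hclose[of f n] f QI by auto
      hence "f \<in> K_F F" using close_K[OF assms(1), of f g] f QI \<open>g \<in> K_F F\<close> by auto
      thus "g \<in> h ` C_F F" using f by (auto simp: C_F_def)
    qed
  qed
  have avoid: "h d n \<noteq> e n" if d: "d \<in> D" and e: "e \<in> E" for d e n
  proof
    assume eq: "h d n = e n"
    have "d n \<in> {-1<..<1}" using d assms(3) by (auto simp: Qint_def)
    hence pos: "1 - (d n)^2 > 0" using abs_square_less_1[of "d n"] by auto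
    have "d n + A n * (1 - (d n)^2) = e n" using eq by (simp add: h_def phi_def)
    hence "A n = (e n - d n) / (1 - (d n)^2)" using pos by (simp add: field_simps)
    hence "A n \<in> B n" unfolding B_def using d e by force
    thus False using A[of n] by blast
  qed
  show ?thesis using hom hC hI avoid by blast
qed

end
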